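(* Let $f,g\in\mathrm{Diff}(\mathbb{C},0)$ be two holomorphic diffeomorphisms fixing the origin, both distinct from the identity, and let $W(a,b)$ be a non-trivial reduced word in $a,a^{-1},b,b^{-1}$. If there exists a formal series $\hat h\in\widehat{\mathrm{Diff}}(\mathbb{C},0)$ such that $W(f,\hat h^{-1}\circ g\circ\hat h)\neq\mathrm{id}$, then there also exists $h\in\mathrm{Diff}(\mathbb{C},0)$ such that $W(f,h^{-1}\circ g\circ h)\neq\mathrm{id}$. In fact, the set of $h\in\mathrm{Diff}(\mathbb{C},0)$ such that $W(f,h^{-1}\circ g\circ h)\neq\mathrm{id}$ is open and dense for the analytic topology.
   Context: $\mathrm{Diff}(\mathbb{C},0)$ is the group of germs of holomorphic diffeomorphisms of $\mathbb{C}$ fixing $0$; $\widehat{\mathrm{Diff}}(\mathbb{C},0)$ is the group (under composition) of formal series $\sum_{i\ge1}c_ix^i$ with $c_1\neq0$, into which $\mathrm{Diff}(\mathbb{C},0)$ injects via Taylor series at $0$. $W(f,g)$ denotes the element obtained by substituting $a=f$, $a^{-1}=f^{-1}$, $b=g$, $b^{-1}=g^{-1}$ and composing (as germs or formal series). Analytic topology: for $r>0$ and $h$ holomorphic near $0$, $\|h\|_r=\sup_{B(r)}|h|$ if $h$ extends holomorphically to the open disc $B(r)$ of radius $r$, and $+\infty$ otherwise; a basis of open sets of $\mathrm{Diff}(\mathbb{C},0)$ is given by the sets $\{g:\|g-f\|_r<\varepsilon\}$, $f\in\mathrm{Diff}(\mathbb{C},0)$, $r,\varepsilon>0$. *)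

theory Defs
  imports "HOL-Complex_Analysis.Complex_Analysis"
begin

text \<open>A germ at 0 is represented by a function defined (at least) near 0; two functions
  represent the same germ iff they agree on a neighbourhood of 0.\<close>

definition germ_eq :: "(complex \<Rightarrow> complex) \<Rightarrow> (complex \<Rightarrow> complex) \<Rightarrow> bool" where
  "germ_eq f g \<longleftrightarrow> (\<forall>\<^sub>F z in nhds 0. f z = g z)"

definition Diff0 :: "(complex \<Rightarrow> complex) set" where
  "Diff0 = {f. f analytic_on {0} \<and> f 0 = 0 \<and> deriv f 0 \<noteq> 0}"

definition germ_inv :: "(complex \<Rightarrow> complex) \<Rightarrow> (complex \<Rightarrow> complex)" where
  "germ_inv f = (SOME k. k \<in> Diff0 \<and> germ_eq (f \<circ> k) id \<and> germ_eq (k \<circ> f) id)"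

text \<open>Formal diffeomorphisms: formal series without constant term and with
  non-zero linear coefficient; group law = composition (oo), inverse = fps_inv.\<close>

definition FDiff0 :: "complex fps set" where
  "FDiff0 = {F. F $ 0 = 0 \<and> F $ 1 \<noteq> 0}"

datatype letter = A | Ainv | B | Binv

fun letter_inv :: "letter \<Rightarrow> letter" where
  "letter_inv A = Ainv" | "letter_inv Ainv = A" | "letter_inv B = Binv" | "letter_inv Binv = B"

definition reduced_word :: "letter list \<Rightarrow> bool" where
  "reduced_word w \<longleftrightarrow> (\<forall>i. Suc i < length w \<longrightarrow> w ! Suc i \<noteq> letter_inv (w ! i))"

fun letter_val :: "'a \<Rightarrow> 'a \<Rightarrow> 'a \<Rightarrow> 'a \<Rightarrow> letter \<Rightarrow> 'a" where
  "letter_val a ai b bi A = a" | "letter_val a ai b bi Ainv = ai"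
| "letter_val a ai b bi B = b" | "letter_val a ai b bi Binv = bi"

definition word_eval :: "('a \<Rightarrow> 'a \<Rightarrow> 'a) \<Rightarrow> 'a \<Rightarrow> 'a \<Rightarrow> 'a \<Rightarrow> 'a \<Rightarrow> 'a \<Rightarrow> letter list \<Rightarrow> 'a" where
  "word_eval cmp one a ai b bi w = foldr (\<lambda>l acc. cmp (letter_val a ai b bi l) acc) w one"

definition germ_word :: "letter list \<Rightarrow> (complex \<Rightarrow> complex) \<Rightarrow> (complex \<Rightarrow> complex) \<Rightarrow> (complex \<Rightarrow> complex)" where
  "germ_word w f g = word_eval (\<lambda>p q. p \<circ> q) (\<lambda>z. z) f (germ_inv f) g (germ_inv g) w"

definition fps_word :: "letter list \<Rightarrow> complex fps \<Rightarrow> complex fps \<Rightarrow> complex fps" where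
  "fps_word w F G = word_eval (\<lambda>P Q. P oo Q) fps_X F (fps_inv F) G (fps_inv G) w"

definition extends_to_ball :: "real \<Rightarrow> (complex \<Rightarrow> complex) \<Rightarrow> (complex \<Rightarrow> complex) \<Rightarrow> bool" where
  "extends_to_ball r h F \<longleftrightarrow> F holomorphic_on ball 0 r \<and> germ_eq F h"

definition germ_norm :: "real \<Rightarrow> (complex \<Rightarrow> complex) \<Rightarrow> ereal" where
  "germ_norm r h = (if \<exists>F. extends_to_ball r h F
      then (SUP z\<in>ball 0 r. ereal (norm ((SOME F. extends_to_ball r h F) z)))
      else \<infinity>)"

definition analytic_open :: "(complex \<Rightarrow> complex) set \<Rightarrow> bool" where
  "analytic_open S \<longleftrightarrow> S \<subseteq> Diff0 \<and>
     (\<forall>h\<in>S. \<exists>r>0. \<exists>\<epsilon>>0. \<forall>k\<in>Diff0. germ_norm r (\<lambda>z. k z - h z) < ereal \<epsilon> \<longrightarrow> k \<in> S)"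

definition analytic_dense :: "(complex \<Rightarrow> complex) set \<Rightarrow> bool" where
  "analytic_dense S \<longleftrightarrow>
     (\<forall>f\<in>Diff0. \<forall>r>0. \<forall>\<epsilon>>0. \<exists>k\<in>S. k \<in> Diff0 \<and> germ_norm r (\<lambda>z. k z - f z) < ereal \<epsilon>)"

end

theory Submission
  imports Defs
begin

unbundle no vec_syntax





definition chol :: "complex set \<Rightarrow> (complex \<Rightarrow> complex fps) \<Rightarrow> bool" where
  "chol U P \<longleftrightarrow> (\<forall>i. (\<lambda>t. P t $ i) holomorphic_on U)"

definition ctends :: "'p filter \<Rightarrow> ('p \<Rightarrow> complex fps) \<Rightarrow> complex fps \<Rightarrow> bool" where
  "ctends F P Q \<longleftrightarrow> (\<forall>i. ((\<lambda>x. P x $ i) \<longlongrightarrow> Q $ i) F)"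

lemma chol_const: "chol U (\<lambda>_. P1)"
  by (simp add: chol_def)

lemma ctends_const: "ctends F (\<lambda>_. P1) P1"
  by (simp add: ctends_def)

lemma chol_mult: "chol U P \<Longrightarrow> chol U Q \<Longrightarrow> chol U (\<lambda>t. P t * Q t)"
  unfolding chol_def fps_mult_nth by (auto intro!: holomorphic_intros)

lemma ctends_mult: "ctends F P Z \<Longrightarrow> ctends F Q Y \<Longrightarrow> ctends F (\<lambda>t. P t * Q t) (Z * Y)"
  unfolding ctends_def fps_mult_nth by (auto intro!: tendsto_intros)

lemma chol_power: "chol U P \<Longrightarrow> chol U (\<lambda>t. P t ^ k)"
  by (induction k) (auto simp: chol_const chol_mult)

lemma ctends_power: "ctends F P Z \<Longrightarrow> ctends F (\<lambda>t. P t ^ k) (Z ^ k)"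
  by (induction k) (auto simp: ctends_const ctends_mult)

lemma chol_compose: "chol U P \<Longrightarrow> chol U Q \<Longrightarrow> chol U (\<lambda>t. P t oo Q t)"
proof -
  assume a: "chol U P" "chol U Q"
  have "chol U (\<lambda>t. Q t ^ k)" for k using a(2) by (rule chol_power)
  with a show ?thesis
    unfolding chol_def fps_compose_nth by (auto intro!: holomorphic_intros)
qed

lemma ctends_compose: "ctends F P Z \<Longrightarrow> ctends F Q Y \<Longrightarrow> ctends F (\<lambda>t. P t oo Q t) (Z oo Y)"
proof -
  assume a: "ctends F P Z" "ctends F Q Y"
  have "ctends F (\<lambda>t. Q t ^ k) (Y ^ k)" for k using a(2) by (rule ctends_power)
  with a show ?thesis
    unfolding ctends_def fps_compose_nth by (auto intro!: tendsto_intros)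
qed

lemma fps_inv_nth: fixes a :: "'a::field fps" shows "fps_inv a $ n = compinv a n"
  by (simp add: fps_inv_def)

lemma chol_inv:
  fixes P :: "complex \<Rightarrow> complex fps"
  assumes P: "chol U P" and nz: "\<And>t. t \<in> U \<Longrightarrow> P t $ 1 \<noteq> 0"
  shows "chol U (\<lambda>t. fps_inv (P t))"
proof -
  have pw: "chol U (\<lambda>t. P t ^ k)" for k using P by (rule chol_power)
  have "\<forall>j\<le>n. (\<lambda>t. compinv (P t) j) holomorphic_on U" for n
  proof (induction n)
    case 0 then show ?case by simp
  next
    case (Suc n)
    have "(\<lambda>t. compinv (P t) (Suc n)) holomorphic_on U"
      unfolding compinv.simps
      using Suc pw P nz unfolding chol_def
      by (auto intro!: holomorphic_intros)
    with Suc show ?case by (auto simp: le_Suc_eq)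
  qed
  then show ?thesis unfolding chol_def fps_inv_nth by blast
qed

lemma ctends_inv:
  fixes P :: "'p \<Rightarrow> complex fps"
  assumes P: "ctends F P Z" and nz: "Z $ 1 \<noteq> 0"
  shows "ctends F (\<lambda>t. fps_inv (P t)) (fps_inv Z)"
proof -
  have pw: "ctends F (\<lambda>t. P t ^ k) (Z ^ k)" for k using P by (rule ctends_power)
  have "\<forall>j\<le>n. ((\<lambda>t. compinv (P t) j) \<longlongrightarrow> compinv Z j) F" for n
  proof (induction n)
    case 0 then show ?case by simp
  next
    case (Suc n)
    have "((\<lambda>t. compinv (P t) (Suc n)) \<longlongrightarrow> compinv Z (Suc n)) F"
      unfolding compinv.simps
      using Suc pw P nz unfolding ctends_def
      by (auto intro!: tendsto_intros)
    with Suc show ?case by (auto simp: le_Suc_eq)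
  qed
  then show ?thesis unfolding ctends_def fps_inv_nth by blast
qed

lemma chol_word:
  assumes "chol U P1" "chol U P2" "chol U P3" "chol U P4"
  shows "chol U (\<lambda>t. word_eval (\<lambda>P Q. P oo Q) fps_X (P1 t) (P2 t) (P3 t) (P4 t) w)"
proof (induction w)
  case Nil then show ?case by (simp add: word_eval_def chol_const)
next
  case (Cons l w)
  have "chol U (\<lambda>t. letter_val (P1 t) (P2 t) (P3 t) (P4 t) l)"
    using assms by (cases l) auto
  with Cons show ?case by (simp add: word_eval_def chol_compose)
qed

lemma ctends_word:
  assumes "ctends F P1 Q1" "ctends F P2 Q2" "ctends F P3 Q3" "ctends F P4 Q4"
  shows "ctends F (\<lambda>t. word_eval (\<lambda>P Q. P oo Q) fps_X (P1 t) (P2 t) (P3 t) (P4 t) w)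
     (word_eval (\<lambda>P Q. P oo Q) fps_X Q1 Q2 Q3 Q4 w)"
proof (induction w)
  case Nil then show ?case by (simp add: word_eval_def ctends_const)
next
  case (Cons l w)
  have "ctends F (\<lambda>t. letter_val (P1 t) (P2 t) (P3 t) (P4 t) l) (letter_val Q1 Q2 Q3 Q4 l)"
    using assms by (cases l) auto
  with Cons show ?case by (simp add: word_eval_def ctends_compose)
qed

lemma compose_nth1: fixes a b :: "'a::comm_ring_1 fps" shows "b $ 0 = 0 \<Longrightarrow> (a oo b) $ 1 = a $ 1 * (b $ 1 :: 'a::comm_ring_1)"
  by (simp add: fps_compose_nth numeral_2_eq_2 fps_mult_nth)

lemma fps_inv_nth1: fixes a :: "'a::field fps" shows "fps_inv a $ 1 = 1 / (a $ 1 :: 'a::field)"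
  by (simp add: fps_inv_nth)

lemma fps_inv_nth0: fixes a :: "'a::field fps" shows "fps_inv a $ 0 = 0"
  by (simp add: fps_inv_nth)

definition conjf :: "complex fps \<Rightarrow> complex fps \<Rightarrow> complex fps" where
  "conjf G K = fps_inv K oo (G oo K)"

lemma conjf_nth1: fixes K G :: "complex fps"
  assumes "K $ 0 = 0" "K $ 1 \<noteq> 0" "G $ 0 = 0" shows "conjf G K $ 1 = G $ 1"
proof -
  have "conjf G K $ 1 = fps_inv K $ 1 * ((G oo K) $ 1)"
    unfolding conjf_def by (rule compose_nth1) (simp add: assms)
  also have "(G oo K) $ 1 = G $ 1 * K $ 1" by (rule compose_nth1) (simp add: assms)
  finally show ?thesis using assms by (simp add: fps_inv_nth1[of K] del: One_nat_def)
qed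

lemma chol_Phi:
  fixes P :: "complex \<Rightarrow> complex fps"
  assumes P: "chol U P" and nz: "\<And>t. t \<in> U \<Longrightarrow> P t $ 1 \<noteq> 0"
    and z: "\<And>t. t \<in> U \<Longrightarrow> P t $ 0 = 0" and G1: "G $ 1 \<noteq> 0" and G0: "G $ 0 = 0"
  shows "chol U (\<lambda>t. fps_word w F (conjf G (P t)))"
proof -
  have c: "chol U (\<lambda>t. conjf G (P t))"
    unfolding conjf_def by (intro chol_compose chol_inv P nz chol_const)
  have "chol U (\<lambda>t. fps_inv (conjf G (P t)))"
    by (rule chol_inv[OF c]) (simp add: conjf_nth1[of _ G] nz z G1 G0 del: One_nat_def)
  then show ?thesis unfolding fps_word_def
    by (intro chol_word c chol_const)
qed

lemma ctends_Phi:
  fixes P :: "'p \<Rightarrow> complex fps"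
  assumes P: "ctends F P K" and nz: "K $ 1 \<noteq> 0" and z: "K $ 0 = 0" and G1: "G $ 1 \<noteq> 0" and G0: "G $ 0 = 0"
  shows "ctends F (\<lambda>t. fps_word w P1 (conjf G (P t))) (fps_word w P1 (conjf G K))"
proof -
  have c: "ctends F (\<lambda>t. conjf G (P t)) (conjf G K)"
    unfolding conjf_def by (intro ctends_compose ctends_inv P nz ctends_const)
  have "ctends F (\<lambda>t. fps_inv (conjf G (P t))) (fps_inv (conjf G K))"
    by (rule ctends_inv[OF c]) (simp add: conjf_nth1[of _ G] nz z G1 G0 del: One_nat_def)
  then show ?thesis unfolding fps_word_def
    by (intro ctends_word c ctends_const)
qed






abbreviation fe :: "(complex \<Rightarrow> complex) \<Rightarrow> complex fps" where
  "fe h \<equiv> fps_expansion h 0"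

lemma fe_nth0: "fe h $ 0 = h 0"
  by (simp add: fps_expansion_def)

lemma fe_nth1: "fe h $ 1 = deriv h 0"
  by (simp add: fps_expansion_def)

lemma Diff0_iff: "h \<in> Diff0 \<longleftrightarrow> h analytic_on {0} \<and> fe h $ 0 = 0 \<and> fe h $ 1 \<noteq> 0"
  by (simp add: Diff0_def fe_nth0 fe_nth1 del: One_nat_def)

lemma Diff0_exp: "h \<in> Diff0 \<Longrightarrow> h has_fps_expansion fe h"
  by (simp add: Diff0_def analytic_at_imp_has_fps_expansion_0)

lemma fe_id: "fe (\<lambda>z. z) = fps_X"
  by (rule fps_expansion_eqI) (rule has_fps_expansion_fps_X)

lemma id_Diff0: "(\<lambda>z. z) \<in> Diff0"
  by (simp add: Diff0_def)

lemma Diff0_compose: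
  assumes "f \<in> Diff0" "g \<in> Diff0"
  shows "f \<circ> g \<in> Diff0 \<and> fe (f \<circ> g) = fe f oo fe g"
proof -
  have e: "(f \<circ> g) has_fps_expansion (fe f oo fe g)"
    by (rule has_fps_expansion_compose[OF Diff0_exp[OF assms(1)] Diff0_exp[OF assms(2)]])
       (use assms in \<open>simp add: Diff0_iff\<close>)
  have fe: "fe (f \<circ> g) = fe f oo fe g" using e by (rule fps_expansion_eqI)
  have "(fe f oo fe g) $ 1 = fe f $ 1 * fe g $ 1"
    by (rule compose_nth1) (use assms in \<open>simp add: Diff0_iff\<close>)
  then show ?thesis
    using assms has_fps_expansion_imp_analytic_0[OF e] fe
    by (simp add: Diff0_iff del: One_nat_def)
qed

lemma germ_eq_fe:
  assumes "f analytic_on {0}" "g analytic_on {0}"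
  shows "germ_eq f g \<longleftrightarrow> fe f = fe g"
proof
  assume "germ_eq f g" then show "fe f = fe g"
    unfolding germ_eq_def by (rule fps_expansion_cong)
next
  assume eq: "fe f = fe g"
  have "f has_fps_expansion fe f" "g has_fps_expansion fe g"
    using assms analytic_at_imp_has_fps_expansion_0 by auto
  then have "\<forall>\<^sub>F z in nhds 0. eval_fps (fe f) z = f z" "\<forall>\<^sub>F z in nhds 0. eval_fps (fe f) z = g z"
    using eq by (auto simp: has_fps_expansion_def)
  then show "germ_eq f g" unfolding germ_eq_def
    by eventually_elim simp
qed

lemma Diff0_inv_ex:
  assumes "f \<in> Diff0"
  shows "\<exists>k. k \<in> Diff0 \<and> germ_eq (f \<circ> k) id \<and> germ_eq (k \<circ> f) id"
proof -
  from assms obtain S where S: "open S" "0 \<in> S" "f holomorphic_on S" and f0: "f 0 = 0"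
    and d: "deriv f 0 \<noteq> 0"
    by (auto simp: Diff0_def analytic_at)
  obtain r where r: "r > 0" "ball 0 r \<subseteq> S" "open (f ` ball 0 r)" "inj_on f (ball 0 r)"
    using has_complex_derivative_locally_invertible[OF S(3) S(2) S(1) d] by blast
  have hb: "f holomorphic_on ball 0 r" using S(3) r(2) holomorphic_on_subset by blast
  obtain k where k: "k holomorphic_on f ` ball 0 r"
    "\<And>z. z \<in> ball 0 r \<Longrightarrow> deriv f z * deriv k (f z) = 1"
    "\<And>z. z \<in> ball 0 r \<Longrightarrow> k (f z) = z"
    using holomorphic_has_inverse[OF hb open_ball r(4)] by blast
  have 0: "0 \<in> ball (0::complex) r" using r by simp
  have f0': "0 \<in> f ` ball 0 r" using 0 f0 by (metis image_eqI)
  have ka: "k analytic_on {0}" using k(1) r(3) f0' analytic_at by blast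
  have k0: "k 0 = 0" using k(3)[OF 0] f0 by simp
  have kd: "deriv k 0 \<noteq> 0" using k(2)[OF 0] f0 by auto
  have "germ_eq (k \<circ> f) id" unfolding germ_eq_def
    using eventually_nhds_in_open[OF open_ball 0]
    by (rule eventually_mono) (simp add: k(3))
  moreover have "germ_eq (f \<circ> k) id" unfolding germ_eq_def
    using eventually_nhds_in_open[OF r(3) f0']
    by (rule eventually_mono) (auto simp: k(3))
  ultimately show ?thesis using ka k0 kd by (auto simp: Diff0_def)
qed

lemma germ_inv_props:
  assumes "f \<in> Diff0"
  shows "germ_inv f \<in> Diff0" "germ_eq (f \<circ> germ_inv f) id" "germ_eq (germ_inv f \<circ> f) id"
  using someI_ex[OF Diff0_inv_ex[OF assms]] unfolding germ_inv_def by auto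

lemma fe_germ_inv:
  assumes "f \<in> Diff0"
  shows "fe (germ_inv f) = fps_inv (fe f)"
proof -
  let ?k = "germ_inv f"
  have k: "?k \<in> Diff0" by (rule germ_inv_props[OF assms])
  have c: "f \<circ> ?k \<in> Diff0" "fe (f \<circ> ?k) = fe f oo fe ?k"
    using Diff0_compose[OF assms k] by auto
  have "fe (f \<circ> ?k) = fe (\<lambda>z. z)"
    using germ_inv_props(2)[OF assms] c(1) id_Diff0
    by (subst germ_eq_fe[symmetric]) (auto simp: Diff0_def id_def)
  then have X: "fe f oo fe ?k = fps_X" using c fe_id by simp
  have H0: "fe f $ 0 = 0" "fe f $ 1 \<noteq> 0" "fe ?k $ 0 = 0"
    using assms k by (auto simp: Diff0_iff)
  have "fps_inv (fe f) = fps_inv (fe f) oo (fe f oo fe ?k)" using X by simp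
  also have "\<dots> = (fps_inv (fe f) oo fe f) oo fe ?k"
    by (rule fps_compose_assoc) (use H0 in auto)
  also have "\<dots> = fe ?k" using H0 by (simp add: fps_inv)
  finally show ?thesis by simp
qed

lemma word_Diff0:
  assumes "a \<in> Diff0" "ai \<in> Diff0" "b \<in> Diff0" "bi \<in> Diff0"
  shows "word_eval (\<lambda>p q. p \<circ> q) (\<lambda>z. z) a ai b bi w \<in> Diff0 \<and>
    fe (word_eval (\<lambda>p q. p \<circ> q) (\<lambda>z. z) a ai b bi w) =
    word_eval (\<lambda>P Q. P oo Q) fps_X (fe a) (fe ai) (fe b) (fe bi) w"
proof (induction w)
  case Nil then show ?case by (simp add: word_eval_def id_Diff0 fe_id)
next
  case (Cons l w)
  have "letter_val a ai b bi l \<in> Diff0 \<and> fe (letter_val a ai b bi l) = letter_val (fe a) (fe ai) (fe b) (fe bi) l"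
    using assms by (cases l) auto
  then have l: "letter_val a ai b bi l \<in> Diff0" "fe (letter_val a ai b bi l) = letter_val (fe a) (fe ai) (fe b) (fe bi) l" by auto
  let ?r = "word_eval (\<lambda>p q. p \<circ> q) (\<lambda>z. z) a ai b bi w"
  have e: "word_eval (\<lambda>p q. p \<circ> q) (\<lambda>z. z) a ai b bi (l # w) = letter_val a ai b bi l \<circ> ?r"
    "word_eval (\<lambda>P Q. P oo Q) fps_X (fe a) (fe ai) (fe b) (fe bi) (l # w) =
     letter_val (fe a) (fe ai) (fe b) (fe bi) l oo word_eval (\<lambda>P Q. P oo Q) fps_X (fe a) (fe ai) (fe b) (fe bi) w"
    by (simp_all add: word_eval_def)
  from Cons.IH have r: "?r \<in> Diff0" and r2: "fe ?r = word_eval (\<lambda>P Q. P oo Q) fps_X (fe a) (fe ai) (fe b) (fe bi) w" by blast+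
  have c: "letter_val a ai b bi l \<circ> ?r \<in> Diff0 \<and> fe (letter_val a ai b bi l \<circ> ?r) = fe (letter_val a ai b bi l) oo fe ?r"
    by (rule Diff0_compose[OF l(1) r])
  show ?case unfolding e using c unfolding l(2) r2 .
qed

lemma germ_word_fe:
  assumes "f \<in> Diff0" "g \<in> Diff0"
  shows "germ_word w f g \<in> Diff0 \<and> fe (germ_word w f g) = fps_word w (fe f) (fe g)"
  using word_Diff0[OF assms(1) germ_inv_props(1)[OF assms(1)] assms(2) germ_inv_props(1)[OF assms(2)]]
  unfolding germ_word_def fps_word_def by (simp add: fe_germ_inv assms)

lemma conj_fe:
  assumes "h \<in> Diff0" "g \<in> Diff0"
  shows "germ_inv h \<circ> g \<circ> h \<in> Diff0 \<and> fe (germ_inv h \<circ> g \<circ> h) = conjf (fe g) (fe h)"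
proof -
  have hi: "germ_inv h \<in> Diff0" by (rule germ_inv_props[OF assms(1)])
  have 1: "germ_inv h \<circ> g \<in> Diff0" "fe (germ_inv h \<circ> g) = fps_inv (fe h) oo fe g"
    using Diff0_compose[OF hi assms(2)] fe_germ_inv[OF assms(1)] by auto
  have 2: "germ_inv h \<circ> g \<circ> h \<in> Diff0" "fe (germ_inv h \<circ> g \<circ> h) = (fps_inv (fe h) oo fe g) oo fe h"
    using Diff0_compose[OF 1(1) assms(1)] 1(2) by auto
  have "(fps_inv (fe h) oo fe g) oo fe h = fps_inv (fe h) oo (fe g oo fe h)"
    by (rule fps_compose_assoc[symmetric]) (use assms in \<open>auto simp: Diff0_iff\<close>)
  then show ?thesis using 2 by (simp add: conjf_def)
qed

definition Phi :: "letter list \<Rightarrow> complex fps \<Rightarrow> complex fps \<Rightarrow> complex fps \<Rightarrow> complex fps" where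
  "Phi w F G K = fps_word w F (conjf G K)"

lemma S_iff:
  assumes "f \<in> Diff0" "g \<in> Diff0" "h \<in> Diff0"
  shows "germ_eq (germ_word w f (germ_inv h \<circ> g \<circ> h)) id \<longleftrightarrow> Phi w (fe f) (fe g) (fe h) = fps_X"
proof -
  have c: "germ_inv h \<circ> g \<circ> h \<in> Diff0" "fe (germ_inv h \<circ> g \<circ> h) = conjf (fe g) (fe h)"
    using conj_fe[OF assms(3,2)] by auto
  have w: "germ_word w f (germ_inv h \<circ> g \<circ> h) \<in> Diff0"
     "fe (germ_word w f (germ_inv h \<circ> g \<circ> h)) = Phi w (fe f) (fe g) (fe h)"
    using germ_word_fe[OF assms(1) c(1)] c(2) by (auto simp: Phi_def)
  have "germ_eq (germ_word w f (germ_inv h \<circ> g \<circ> h)) (\<lambda>z. z) \<longleftrightarrow> Phi w (fe f) (fe g) (fe h) = fps_X"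
    using w id_Diff0 by (subst germ_eq_fe) (auto simp: Diff0_def fe_id)
  then show ?thesis by (simp add: id_def)
qed






lemma germ_norm_bound:
  assumes "germ_norm r d < ereal e"
  obtains F where "F holomorphic_on ball 0 r" "germ_eq F d" "\<And>z. z \<in> ball 0 r \<Longrightarrow> norm (F z) \<le> e"
proof -
  have ex: "\<exists>F. extends_to_ball r d F"
    using assms by (auto simp: germ_norm_def split: if_splits)
  define F where "F = (SOME F. extends_to_ball r d F)"
  have F: "extends_to_ball r d F" unfolding F_def by (rule someI_ex[OF ex])
  have "(SUP z\<in>ball 0 r. ereal (norm (F z))) < ereal e"
    using assms ex by (simp add: germ_norm_def F_def)
  then have "ereal (norm (F z)) < ereal e" if "z \<in> ball 0 r" for z
    using that by (meson SUP_lessD)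
  then have "norm (F z) \<le> e" if "z \<in> ball 0 r" for z using that by fastforce
  then show ?thesis using that F by (auto simp: extends_to_ball_def)
qed

lemma coeff_est:
  assumes k: "k \<in> Diff0" and h: "h \<in> Diff0" and n: "germ_norm 1 (\<lambda>z. k z - h z) < ereal e"
  shows "norm (fe k $ i - fe h $ i) \<le> 2 ^ i * e"
proof -
  obtain F where F: "F holomorphic_on ball 0 1" "germ_eq F (\<lambda>z. k z - h z)"
    "\<And>z. z \<in> ball 0 1 \<Longrightarrow> norm (F z) \<le> e"
    using germ_norm_bound[OF n] by blast
  have "(\<lambda>z. k z - h z) has_fps_expansion fe k - fe h"
    using Diff0_exp[OF k] Diff0_exp[OF h] by (rule has_fps_expansion_diff)
  then have "fe (\<lambda>z. k z - h z) = fe k - fe h" by (rule fps_expansion_eqI)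
  moreover have "fe F = fe (\<lambda>z. k z - h z)" using F(2) unfolding germ_eq_def by (rule fps_expansion_cong)
  ultimately have "fe k - fe h = fe F" by simp
  then have "fe k $ i - fe h $ i = fe F $ i" by (metis fps_sub_nth)
  also have "fe F $ i = (deriv ^^ i) F 0 / fact i" by (simp add: fps_expansion_def)
  finally have eq: "fe k $ i - fe h $ i = (deriv ^^ i) F 0 / fact i" .
  have sub: "cball (0::complex) (1/2) \<subseteq> ball 0 1" by (auto simp: subset_iff)
  have "norm ((deriv ^^ i) F 0) \<le> fact i * e / (1/2) ^ i"
  proof (rule Cauchy_inequality)
    show "F holomorphic_on ball 0 (1/2)" using F(1) holomorphic_on_subset[OF F(1)] sub ball_subset_cball by blast
    show "continuous_on (cball 0 (1/2)) F"
      using holomorphic_on_imp_continuous_on[OF F(1)] sub continuous_on_subset by blast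
    show "\<And>x. norm (0 - x) = 1/2 \<Longrightarrow> norm (F x) \<le> e" using F(3) by auto
  qed auto
  then show ?thesis unfolding eq by (simp add: norm_divide field_simps)
qed

lemma S_open:
  assumes f: "f \<in> Diff0" and g: "g \<in> Diff0" and h: "h \<in> Diff0"
    and hS: "\<not> germ_eq (germ_word w f (germ_inv h \<circ> g \<circ> h)) id"
  shows "\<exists>r>0. \<exists>\<epsilon>>0. \<forall>k\<in>Diff0. germ_norm r (\<lambda>z. k z - h z) < ereal \<epsilon> \<longrightarrow>
           \<not> germ_eq (germ_word w f (germ_inv k \<circ> g \<circ> k)) id"
proof (rule ccontr)
  assume na: "\<not> ?thesis"
  have "\<exists>k. k \<in> Diff0 \<and> germ_norm 1 (\<lambda>z. k z - h z) < ereal (inverse (real (Suc m))) \<and>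
           germ_eq (germ_word w f (germ_inv k \<circ> g \<circ> k)) id" for m
  proof -
    have "inverse (real (Suc m)) > 0" by simp
    define e where "e = inverse (real (Suc m))"
    have e: "e > 0" unfolding e_def by simp
    have "\<not> (\<forall>k\<in>Diff0. germ_norm 1 (\<lambda>z. k z - h z) < ereal e \<longrightarrow>
           \<not> germ_eq (germ_word w f (germ_inv k \<circ> g \<circ> k)) id)"
    proof
      assume A: "\<forall>k\<in>Diff0. germ_norm 1 (\<lambda>z. k z - h z) < ereal e \<longrightarrow>
           \<not> germ_eq (germ_word w f (germ_inv k \<circ> g \<circ> k)) id"
      have "\<exists>r>0. \<exists>\<epsilon>>0. \<forall>k\<in>Diff0. germ_norm r (\<lambda>z. k z - h z) < ereal \<epsilon> \<longrightarrow>
           \<not> germ_eq (germ_word w f (germ_inv k \<circ> g \<circ> k)) id"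
        by (rule exI[of _ 1], rule conjI[OF zero_less_one], rule exI[of _ e], rule conjI[OF e], rule A)
      with na show False by contradiction
    qed
    then show ?thesis unfolding e_def by blast
  qed
  then have "\<forall>m. \<exists>k. k \<in> Diff0 \<and> germ_norm 1 (\<lambda>z. k z - h z) < ereal (inverse (real (Suc m))) \<and>
           germ_eq (germ_word w f (germ_inv k \<circ> g \<circ> k)) id" by blast
  from choice[OF this] obtain k where kk: "\<forall>m. k m \<in> Diff0 \<and> germ_norm 1 (\<lambda>z. k m z - h z) < ereal (inverse (real (Suc m))) \<and>
           germ_eq (germ_word w f (germ_inv (k m) \<circ> g \<circ> k m)) id" by blast
  have k: "\<And>m. k m \<in> Diff0" "\<And>m. germ_norm 1 (\<lambda>z. k m z - h z) < ereal (inverse (real (Suc m)))"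
     "\<And>m. germ_eq (germ_word w f (germ_inv (k m) \<circ> g \<circ> k m)) id"
    using kk by blast+
  have ct: "ctends sequentially (\<lambda>m. fe (k m)) (fe h)"
    unfolding ctends_def
  proof
    fix i
    have "((\<lambda>m. fe (k m) $ i - fe h $ i) \<longlongrightarrow> 0) sequentially"
    proof (rule Lim_null_comparison)
      show "\<forall>\<^sub>F m in sequentially. norm (fe (k m) $ i - fe h $ i) \<le> 2 ^ i * inverse (real (Suc m))"
        by (intro always_eventually allI coeff_est[OF k(1) h k(2)])
      show "((\<lambda>m. 2 ^ i * inverse (real (Suc m))) \<longlongrightarrow> 0) sequentially"
        using tendsto_mult_right_zero[OF LIMSEQ_inverse_real_of_nat] by simp
    qed
    then show "((\<lambda>m. fe (k m) $ i) \<longlongrightarrow> fe h $ i) sequentially" by (rule LIM_zero_cancel)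
  qed
  have hh: "fe h $ 1 \<noteq> 0" "fe h $ 0 = 0" "fe g $ 1 \<noteq> 0" "fe g $ 0 = 0"
    using h g by (auto simp: Diff0_iff)
  have lim: "ctends sequentially (\<lambda>m. Phi w (fe f) (fe g) (fe (k m))) (Phi w (fe f) (fe g) (fe h))"
    unfolding Phi_def by (rule ctends_Phi[OF ct hh])
  have "Phi w (fe f) (fe g) (fe (k m)) = fps_X" for m
    by (rule S_iff[OF f g k(1), THEN iffD1, OF k(3)])
  then have c: "ctends sequentially (\<lambda>m. fps_X) (Phi w (fe f) (fe g) (fe h))" using lim by simp
  have "fps_X $ i = Phi w (fe f) (fe g) (fe h) $ i" for i
    using c unfolding ctends_def by (intro LIMSEQ_const_iff[THEN iffD1]) blast
  then have "Phi w (fe f) (fe g) (fe h) = fps_X"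
    by (simp add: fps_eq_iff)
  then show False using S_iff[OF f g h, of w] hS by simp
qed






lemma identity_ball:
  assumes "F holomorphic_on ball 0 r" "p holomorphic_on ball 0 r" "germ_eq F p" "z \<in> ball 0 r"
  shows "F z = p z"
proof -
  obtain d where d: "d > 0" "\<And>x. dist x 0 < d \<Longrightarrow> F x = p x"
    using assms(3) unfolding germ_eq_def eventually_nhds_metric by blast
  have "norm z < r" using assms(4) by (simp add: dist_norm)
  then have r: "r > 0" using norm_ge_zero[of z] by linarith
  have "F z - p z = 0"
  proof (rule analytic_continuation[of "\<lambda>x. F x - p x" "ball 0 r" "ball 0 (min d r)" 0 z])
    show "(\<lambda>x. F x - p x) holomorphic_on ball 0 r" using assms by (intro holomorphic_intros)
    show "0 islimpt ball (0::complex) (min d r)" using d r by (simp add: islimpt_ball)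
    show "\<And>x. x \<in> ball 0 (min d r) \<Longrightarrow> F x - p x = 0" using d by (auto simp: dist_commute)
  qed (use r assms in auto)
  then show ?thesis by simp
qed

lemma germ_norm_le:
  assumes "p holomorphic_on ball 0 r" "\<And>z. z \<in> ball 0 r \<Longrightarrow> norm (p z) \<le> Bd" "Bd < e"
  shows "germ_norm r p < ereal e"
proof -
  have ex: "extends_to_ball r p p" by (simp add: extends_to_ball_def germ_eq_def assms(1))
  define F where "F = (SOME F. extends_to_ball r p F)"
  have F: "extends_to_ball r p F" unfolding F_def by (rule someI[of "extends_to_ball r p" p, OF ex])
  have eq: "F z = p z" if "z \<in> ball 0 r" for z
    using F assms(1) that identity_ball by (auto simp: extends_to_ball_def)
  have "(SUP z\<in>ball 0 r. ereal (norm (F z))) \<le> ereal Bd"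
    by (rule SUP_least) (simp add: eq assms(2))
  also have "\<dots> < ereal e" using assms(3) by simp
  finally show ?thesis using exI[of "extends_to_ball r p", OF ex] by (simp add: germ_norm_def F_def[symmetric])
qed

lemma open_conn_affine:
  fixes a b :: complex
  assumes "a \<noteq> 0"
  shows "open {t. a + t * b \<noteq> 0}" "connected {t. a + t * b \<noteq> 0}"
proof -
  have "open {t. a + t * b \<noteq> 0} \<and> connected {t. a + t * b \<noteq> 0}"
  proof (cases "b = 0")
    case True then show ?thesis using assms by (simp add: connected_UNIV)
  next
    case False
    have "a + t * b = 0 \<longleftrightarrow> t = - a / b" for t
      using False by (auto simp: field_simps add_eq_0_iff2 minus_equation_iff)
    then have "{t. a + t * b \<noteq> 0} = - {- a / b}" by auto
    then show ?thesis by (simp add: connected_punctured_universe open_Compl)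
  qed
  then show "open {t. a + t * b \<noteq> 0}" "connected {t. a + t * b \<noteq> 0}" by auto
qed

lemma S_dense:
  fixes f g f0 :: "complex \<Rightarrow> complex" and H :: "complex fps"
  assumes f: "f \<in> Diff0" and g: "g \<in> Diff0" and H: "H \<in> FDiff0"
    and PH: "Phi w (fe f) (fe g) H \<noteq> fps_X"
    and f0: "f0 \<in> Diff0" and r: "r > 0" and e: "e > 0"
  shows "\<exists>k\<in>Diff0. Phi w (fe f) (fe g) (fe k) \<noteq> fps_X \<and> germ_norm r (\<lambda>z. k z - f0 z) < ereal e"
proof -
  define F0 where "F0 = fe f0"
  define D where "D = H - F0"
  define Ph where "Ph = Phi w (fe f) (fe g)"
  have H01: "H $ 0 = 0" "H $ 1 \<noteq> 0" using H by (auto simp: FDiff0_def)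
  have F01: "F0 $ 0 = 0" "F0 $ 1 \<noteq> 0" using f0 by (auto simp: Diff0_iff F0_def)
  have G01: "fe g $ 1 \<noteq> 0" "fe g $ 0 = 0" using g by (auto simp: Diff0_iff)
  have D0: "D $ 0 = 0" using H01 F01 by (simp add: D_def)
  obtain n where n: "Ph H $ n \<noteq> fps_X $ n" using PH by (auto simp: fps_eq_iff Ph_def)
  define T where "T m = (\<Sum>i\<le>m. fps_const (D $ i) * fps_X ^ i)" for m
  have Tn: "T m $ j = (if j \<le> m then D $ j else 0)" for m j
  proof -
    have "T m $ j = (\<Sum>k\<le>m. (if k = j then D $ j else 0))"
      unfolding T_def fps_sum_nth by (intro sum.cong) auto
    then show ?thesis by simp
  qed
  have ct: "ctends sequentially (\<lambda>m. F0 + T m) H"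
    unfolding ctends_def
  proof
    fix j
    have "\<forall>\<^sub>F m in sequentially. (F0 + T m) $ j = H $ j"
      unfolding eventually_sequentially by (rule exI[of _ j]) (simp add: Tn D_def)
    then show "((\<lambda>m. (F0 + T m) $ j) \<longlongrightarrow> H $ j) sequentially" by (rule tendsto_eventually)
  qed
  have "ctends sequentially (\<lambda>m. Ph (F0 + T m)) (Ph H)"
    unfolding Ph_def Phi_def by (rule ctends_Phi[OF ct H01(2) H01(1) G01])
  then have "((\<lambda>m. Ph (F0 + T m) $ n) \<longlongrightarrow> Ph H $ n) sequentially" by (simp add: ctends_def)
  from tendsto_imp_eventually_ne[OF this n]
  obtain m where m: "Ph (F0 + T m) $ n \<noteq> fps_X $ n"
    unfolding eventually_sequentially by blast
  define q where "q z = (\<Sum>i\<le>m. D $ i * z ^ i)" for z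
  have qexp: "q has_fps_expansion T m"
    unfolding q_def T_def by (intro has_fps_expansion_sum has_fps_expansion_cmult_left has_fps_expansion_fps_X_power)
  have qhol: "q holomorphic_on UNIV" unfolding q_def by (intro holomorphic_intros)
  define P where "P t = F0 + fps_const t * T m" for t
  define k where "k t = (\<lambda>z. f0 z + t * q z)" for t
  have kexp: "k t has_fps_expansion P t" for t
    unfolding k_def P_def F0_def
    by (intro has_fps_expansion_add Diff0_exp[OF f0] has_fps_expansion_cmult_left qexp)
  define U where "U = {t. F0 $ 1 + t * T m $ 1 \<noteq> 0}"
  have P1: "P t $ 1 = F0 $ 1 + t * T m $ 1" for t by (simp add: P_def)
  have P0: "P t $ 0 = 0" for t by (simp add: P_def Tn D0 F01)
  have U: "open U" "connected U" unfolding U_def using open_conn_affine[OF F01(2)] by auto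
  have 0: "0 \<in> U" using F01 by (simp add: U_def)
  have 1: "1 \<in> U" using F01 H01 by (simp add: U_def Tn D_def)
  have cholP: "chol U P" unfolding chol_def P_def by (simp, intro allI holomorphic_intros)
  have "chol U (\<lambda>t. Phi w (fe f) (fe g) (P t))"
    unfolding Phi_def
    by (rule chol_Phi[OF cholP _ _ G01]) (auto simp: U_def P1[symmetric] P0 simp del: One_nat_def)
  then have chol: "(\<lambda>t. Ph (P t) $ n - fps_X $ n) holomorphic_on U"
    unfolding chol_def Ph_def by (intro holomorphic_intros) auto
  have c1: "Ph (P 1) $ n - fps_X $ n \<noteq> 0" using m by (simp add: P_def)
  define M where "M = (\<Sum>i\<le>m. norm (D $ i) * r ^ i)"
  have M0: "M \<ge> 0" unfolding M_def using r by (intro sum_nonneg) simp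
  obtain \<rho> where \<rho>: "\<rho> > 0" "ball 0 \<rho> \<subseteq> U" using U(1) 0 open_contains_ball by blast
  define \<delta> where "\<delta> = min (e / (M + 1)) \<rho>"
  have \<delta>: "\<delta> > 0" using e M0 \<rho> by (simp add: \<delta>_def)
  have "\<exists>t\<in>ball 0 \<delta>. Ph (P t) $ n - fps_X $ n \<noteq> 0"
  proof (rule ccontr)
    assume "\<not> ?thesis"
    then have z: "\<And>t. t \<in> ball 0 \<delta> \<Longrightarrow> Ph (P t) $ n - fps_X $ n = 0" by blast
    have "(\<lambda>t. Ph (P t) $ n - fps_X $ n) 1 = 0"
    proof (rule analytic_continuation[OF chol U(1) U(2) _ 0])
      show "ball 0 \<delta> \<subseteq> U" using \<rho> by (auto simp: \<delta>_def)
      show "0 islimpt ball (0::complex) \<delta>" using \<delta> by (simp add: islimpt_ball)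
    qed (use z 1 in auto)
    with c1 show False by simp
  qed
  then obtain t where t: "t \<in> ball 0 \<delta>" "Ph (P t) $ n \<noteq> fps_X $ n" by auto
  have tU: "t \<in> U" using t(1) \<rho> by (auto simp: \<delta>_def)
  have fek: "fe (k t) = P t" using kexp by (rule fps_expansion_eqI)
  have kD: "k t \<in> Diff0"
    using has_fps_expansion_imp_analytic_0[OF kexp[of t]] fek P0 P1 tU
    by (simp add: Diff0_iff U_def del: One_nat_def)
  have kS: "Phi w (fe f) (fe g) (fe (k t)) \<noteq> fps_X"
    using t(2) fek by (auto simp: Ph_def)
  have nt: "norm t < e / (M + 1)" using t(1) by (simp add: \<delta>_def)
  have qb: "norm (q z) \<le> M" if "z \<in> ball 0 r" for z
  proof -
    have "norm (q z) \<le> (\<Sum>i\<le>m. norm (D $ i * z ^ i))" unfolding q_def by (rule norm_sum)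
    also have "\<dots> \<le> M" unfolding M_def
    proof (rule sum_mono)
      fix i
      have "norm z \<le> r" using that by simp
      then have "norm z ^ i \<le> r ^ i" by (simp add: power_mono)
      then show "norm (D $ i * z ^ i) \<le> norm (D $ i) * r ^ i"
        by (simp add: norm_mult norm_power mult_left_mono)
    qed
    finally show ?thesis .
  qed
  have "germ_norm r (\<lambda>z. t * q z) < ereal e"
  proof (rule germ_norm_le)
    show "(\<lambda>z. t * q z) holomorphic_on ball 0 r"
      using qhol by (intro holomorphic_intros) (auto intro: holomorphic_on_subset)
    show "norm (t * q z) \<le> norm t * M" if "z \<in> ball 0 r" for z
      using qb[OF that] by (simp add: norm_mult mult_left_mono)
    have "norm t * M \<le> e / (M + 1) * M" using nt M0 by (intro mult_right_mono) auto
    also have "\<dots> < e" using e M0 by (simp add: field_simps)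
    finally show "norm t * M < e" .
  qed
  moreover have "(\<lambda>z. k t z - f0 z) = (\<lambda>z. t * q z)" by (simp add: k_def)
  ultimately show ?thesis using kD kS by auto
qed






theorem theorem2p5:
  fixes f g :: "complex \<Rightarrow> complex" and w :: "letter list"
  assumes "f \<in> Diff0" and "g \<in> Diff0"
    and "\<not> germ_eq f id" and "\<not> germ_eq g id"
    and "w \<noteq> []" and "reduced_word w"
    and "\<exists>H\<in>FDiff0. fps_word w (fps_expansion f 0)
           (fps_inv H oo (fps_expansion g 0 oo H)) \<noteq> fps_X"
  shows "(\<exists>h\<in>Diff0. \<not> germ_eq (germ_word w f (germ_inv h \<circ> g \<circ> h)) id)
    \<and> analytic_open {h\<in>Diff0. \<not> germ_eq (germ_word w f (germ_inv h \<circ> g \<circ> h)) id}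
    \<and> analytic_dense {h\<in>Diff0. \<not> germ_eq (germ_word w f (germ_inv h \<circ> g \<circ> h)) id}"
proof -
  let ?S = "{h\<in>Diff0. \<not> germ_eq (germ_word w f (germ_inv h \<circ> g \<circ> h)) id}"
  obtain H where H: "H \<in> FDiff0" "Phi w (fe f) (fe g) H \<noteq> fps_X"
    using assms(7) by (auto simp: Phi_def conjf_def)
  have dense: "analytic_dense ?S"
    unfolding analytic_dense_def
  proof (intro ballI allI impI)
    fix f0 :: "complex \<Rightarrow> complex" and r e :: real
    assume f0: "f0 \<in> Diff0" and r: "r > 0" and e: "e > 0"
    obtain k where k: "k \<in> Diff0" "Phi w (fe f) (fe g) (fe k) \<noteq> fps_X"
      "germ_norm r (\<lambda>z. k z - f0 z) < ereal e"
      using S_dense[OF assms(1,2) H f0 r e] by blast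
    have "k \<in> ?S" using k S_iff[OF assms(1,2) k(1), of w] by simp
    then show "\<exists>k\<in>?S. k \<in> Diff0 \<and> germ_norm r (\<lambda>z. k z - f0 z) < ereal e" using k by blast
  qed
  have op: "analytic_open ?S"
    unfolding analytic_open_def
  proof (intro conjI ballI)
    show "?S \<subseteq> Diff0" by blast
  next
    fix h assume h: "h \<in> ?S"
    from S_open[OF assms(1,2), of h w] h
    obtain r \<epsilon> where "r > 0" "\<epsilon> > 0" "\<forall>k\<in>Diff0. germ_norm r (\<lambda>z. k z - h z) < ereal \<epsilon> \<longrightarrow>
           \<not> germ_eq (germ_word w f (germ_inv k \<circ> g \<circ> k)) id" by blast
    then show "\<exists>r>0. \<exists>\<epsilon>>0. \<forall>k\<in>Diff0. germ_norm r (\<lambda>z. k z - h z) < ereal \<epsilon> \<longrightarrow> k \<in> ?S"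
      by blast
  qed
  have "\<exists>k\<in>?S. k \<in> Diff0 \<and> germ_norm 1 (\<lambda>z. k z - z) < ereal 1"
    using dense[unfolded analytic_dense_def, rule_format, OF id_Diff0 zero_less_one zero_less_one] by simp
  then have "\<exists>h\<in>Diff0. \<not> germ_eq (germ_word w f (germ_inv h \<circ> g \<circ> h)) id" by blast
  with dense op show ?thesis by blast
qed


end
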